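(* For all $n\in\mathbb{N}$ the bistatistic $(\operatorname{veh}',\operatorname{SIVEH})$ is Euler–Mahonian on $\mathfrak{S}_n$, i.e. $$\sum_{\pi\in\mathfrak{S}_n}s^{\operatorname{veh}'(\pi)}q^{\operatorname{SIVEH}(\pi)}=\sum_{\pi\in\mathfrak{S}_n}s^{\operatorname{des}(\pi)}q^{\operatorname{MAJ}(\pi)}.$$
   Context: For $\pi=a_1\cdots a_n\in\mathfrak{S}_n$: $\operatorname{Des}(\pi)=\{i\in[n-1]:a_i>a_{i+1}\}$, $\operatorname{des}(\pi)=|\operatorname{Des}(\pi)|$, $\operatorname{MAJ}(\pi)=\sum_{i\in\operatorname{Des}(\pi)}i$. The increasing unordered tree $T'(\pi)$ has root labeled $0$: if $b$ is a right-to-left minimum of $\pi$ then $b$ is a child of the root; otherwise $b$ is a child of the leftmost letter $a$ to the right of $b$ with $a<b$. $\operatorname{veh}'(\pi)$ is the number of non-root vertices of even height in $T'(\pi)$ (root at height $0$), $\operatorname{EV}(\pi)$ is the set of indices $i$ such that $a_i$ has even height, and $\operatorname{SIVEH}(\pi)=\sum_{i\in\operatorname{EV}(\pi)}i$. *)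

theory Defs
  imports Main "HOL-Combinatorics.Multiset_Permutations"
begin

text \<open>Permutations of [n] are words (lists) a_1 ... a_n; list index k corresponds to position k+1.\<close>

definition Des :: "nat list \<Rightarrow> nat set" where
  "Des w = {i \<in> {1..<length w}. w ! (i - 1) > w ! i}"

definition des :: "nat list \<Rightarrow> nat" where
  "des w = card (Des w)"

definition MAJ :: "nat list \<Rightarrow> nat" where
  "MAJ w = (\<Sum>i\<in>Des w. i)"

text \<open>ht (b # ys): height in T'(pi) of the letter b, whose right part is ys.
  If b is a right-to-left minimum its parent is the root (height 1); otherwise its
  parent is the leftmost letter a of ys with a < b.\<close>
function ht :: "nat list \<Rightarrow> nat" where
  "ht [] = 0"
| "ht (b # ys) =
     (if \<exists>a\<in>set ys. a < b
      then Suc (ht (drop (LEAST j. j < length ys \<and> ys ! j < b) ys))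
      else 1)"
  by pat_completeness auto
termination
  by (relation "measure length") auto

definition height_at :: "nat list \<Rightarrow> nat \<Rightarrow> nat" where
  "height_at w i = ht (drop (i - 1) w)"

definition EV :: "nat list \<Rightarrow> nat set" where
  "EV w = {i \<in> {1..length w}. even (height_at w i)}"

definition veh' :: "nat list \<Rightarrow> nat" where
  "veh' w = card (EV w)"

definition SIVEH :: "nat list \<Rightarrow> nat" where
  "SIVEH w = (\<Sum>i\<in>EV w. i)"

end

theory Submission
  imports Defs
begin


definition shf :: "nat \<Rightarrow> nat \<Rightarrow> nat" where
  "shf r x = (if r \<le> x then Suc x else x)"

definition insr :: "nat \<Rightarrow> nat list \<Rightarrow> nat list" where
  "insr r u = r # map (shf r) u"

abbreviation P :: "nat \<Rightarrow> nat list set" where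
  "P m \<equiv> permutations_of_set {1..m}"

lemma inj_shf: "inj (shf r)"
  unfolding inj_def shf_def by auto

lemma insr_in:
  assumes u: "u \<in> P m" and r: "r \<in> {1..Suc m}"
  shows "insr r u \<in> P (Suc m)"
proof
  have su: "set u = {1..m}" "distinct u" using permutations_of_setD[OF u] by auto
  have "shf r ` {1..m} \<union> {r} = {1..Suc m}"
  proof
    show "shf r ` {1..m} \<union> {r} \<subseteq> {1..Suc m}" using r by (auto simp: shf_def)
    show "{1..Suc m} \<subseteq> shf r ` {1..m} \<union> {r}"
    proof
      fix y assume y: "y \<in> {1..Suc m}"
      show "y \<in> shf r ` {1..m} \<union> {r}"
      proof (cases "y < r")
        case True
        then have "y = shf r y" "y \<in> {1..m}" using y r by (auto simp: shf_def)
        then show ?thesis by blast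
      next
        case False
        show ?thesis
        proof (cases "y = r")
          case False
          with \<open>\<not> y < r\<close> have "y = shf r (y - 1)" "y - 1 \<in> {1..m}" using y r by (auto simp: shf_def)
          then show ?thesis by blast
        qed simp
      qed
    qed
  qed
  then show "set (insr r u) = {1..Suc m}" using su by (auto simp: insr_def)
  have "r \<notin> shf r ` set u" by (auto simp: shf_def)
  then show "distinct (insr r u)" using su inj_shf
    by (auto simp: insr_def distinct_map inj_on_def)
qed

lemma insr_inj: "inj_on (\<lambda>(r,u). insr r u) X"
proof (rule inj_onI, clarify)
  fix r u r' u' assume "insr r u = insr r' u'"
  then have "r = r'" "map (shf r) u = map (shf r) u'" by (auto simp: insr_def)
  then show "r = r' \<and> u = u'" using inj_shf by (auto dest: inj_map_eq_map)
qed

lemma P_Suc: "P (Suc m) = (\<lambda>(r,u). insr r u) ` ({1..Suc m} \<times> P m)"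
proof -
  have sub: "(\<lambda>(r,u). insr r u) ` ({1..Suc m} \<times> P m) \<subseteq> P (Suc m)"
    using insr_in by auto
  have "card ((\<lambda>(r,u). insr r u) ` ({1..Suc m} \<times> P m)) = card ({1..Suc m} \<times> P m)"
    by (rule card_image[OF insr_inj])
  also have "\<dots> = Suc m * fact m" by (simp add: card_cartesian_product)
  also have "\<dots> = card (P (Suc m))" by simp
  finally show ?thesis using sub by (intro card_subset_eq[symmetric]) auto
qed



definition smo :: "(nat \<Rightarrow> nat) \<Rightarrow> nat set \<Rightarrow> bool" where
  "smo h A = (\<forall>x\<in>A. \<forall>y\<in>A. x < y \<longrightarrow> h x < h y)"

lemma smo_subset: "smo h A \<Longrightarrow> B \<subseteq> A \<Longrightarrow> smo h B"
  unfolding smo_def by blast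

lemma smo_less_iff: "smo h A \<Longrightarrow> x \<in> A \<Longrightarrow> y \<in> A \<Longrightarrow> (h x < h y \<longleftrightarrow> x < y)"
  unfolding smo_def by (metis linorder_neqE_nat order_less_asym)

lemma ht_cons_map_aux:
  "\<forall>xs v v'. length xs = n \<longrightarrow> smo h (set xs) \<longrightarrow> (\<forall>x\<in>set xs. x < v \<longleftrightarrow> h x < v')
     \<longrightarrow> ht (v' # map h xs) = ht (v # xs)"
proof (induction n rule: less_induct)
  case (less n)
  show ?case
  proof (intro allI impI)
    fix xs v v' assume len: "length xs = n" and sm: "smo h (set xs)"
      and eq: "\<forall>x\<in>set xs. x < v \<longleftrightarrow> h x < v'"
    have ex: "(\<exists>a\<in>set (map h xs). a < v') \<longleftrightarrow> (\<exists>a\<in>set xs. a < v)" using eq by auto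
    show "ht (v' # map h xs) = ht (v # xs)"
    proof (cases "\<exists>a\<in>set xs. a < v")
      case False then show ?thesis using ex by simp
    next
      case True
      have L: "(LEAST j. j < length (map h xs) \<and> map h xs ! j < v') = (LEAST j. j < length xs \<and> xs ! j < v)"
        using eq by (intro arg_cong[where f=Least] ext) (auto)
      define j where "j = (LEAST j. j < length xs \<and> xs ! j < v)"
      from True obtain i where "i < length xs" "xs ! i < v" by (auto simp: in_set_conv_nth)
      then have jl: "j < length xs" unfolding j_def by (metis (mono_tags, lifting) LeastI)
      have dr: "drop j xs = xs ! j # drop (Suc j) xs" using jl by (simp add: Cons_nth_drop_Suc)
      have sub: "set (drop (Suc j) xs) \<subseteq> set xs" by (rule set_drop_subset)
      have xj: "xs ! j \<in> set xs" using jl by simp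
      have "ht (h (xs ! j) # map h (drop (Suc j) xs)) = ht (xs ! j # drop (Suc j) xs)"
      proof -
        have "length (drop (Suc j) xs) < n" using len jl by simp
        moreover have "smo h (set (drop (Suc j) xs))" using sm sub by (rule smo_subset)
        moreover have "\<forall>x\<in>set (drop (Suc j) xs). x < xs ! j \<longleftrightarrow> h x < h (xs ! j)"
        proof
          fix x assume x: "x \<in> set (drop (Suc j) xs)"
          then have xs: "x \<in> set xs" using sub by blast
          show "x < xs ! j \<longleftrightarrow> h x < h (xs ! j)" using sm xs xj unfolding smo_def
            by (metis linorder_neqE_nat order_less_asym order_less_irrefl)
        qed
        ultimately show ?thesis using less.IH by blast
      qed
      then have "ht (map h (drop j xs)) = ht (drop j xs)" using dr by simp
      then show ?thesis using True ex L by (simp add: j_def drop_map)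
    qed
  qed
qed

lemma ht_cons_map: "smo h (set xs) \<Longrightarrow> \<forall>x\<in>set xs. x < v \<longleftrightarrow> h x < v' \<Longrightarrow> ht (v' # map h xs) = ht (v # xs)"
  using ht_cons_map_aux by blast

lemma ht_map: "smo h (set xs) \<Longrightarrow> ht (map h xs) = ht xs"
proof (cases xs)
  case (Cons x ys)
  assume sm: "smo h (set xs)"
  then have "smo h (set ys)" using Cons by (auto intro: smo_subset)
  moreover have "\<forall>y\<in>set ys. y < x \<longleftrightarrow> h y < h x" using sm Cons unfolding smo_def
    by (metis linorder_neqE_nat order_less_asym list.set_intros)
  ultimately show ?thesis using Cons ht_cons_map by simp
qed simp

lemma smo_shf: "smo (shf r) A"
  unfolding smo_def shf_def by auto

lemma ht_insr: "ht (insr r u) = ht (r # u)"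
  unfolding insr_def by (rule ht_cons_map[OF smo_shf]) (auto simp: shf_def)

lemma ht_cc_ge: "\<not> b < v \<Longrightarrow> ht (v # b # u) = ht (v # u)"
proof (cases "\<exists>a\<in>set u. a < v")
  case True
  assume nb: "\<not> b < v"
  from True obtain i where i: "i < length u" "u ! i < v" by (auto simp: in_set_conv_nth)
  have "(LEAST j. j < length (b # u) \<and> (b # u) ! j < v) = Suc (LEAST j. j < length u \<and> u ! j < v)"
    by (rule Least_Suc2[where n="Suc i" and m=i]) (use i nb in auto)
  then show ?thesis using True nb by simp
qed auto

lemma ht_cc_lt: "b < v \<Longrightarrow> ht (v # b # u) = Suc (ht (b # u))"
proof -
  assume "b < v"
  then have "(LEAST j. j < length (b # u) \<and> (b # u) ! j < v) = 0"
    by (intro Least_equality) auto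
  then show ?thesis using \<open>b < v\<close> by simp
qed

lemma ht_j_insr_le: "j \<le> r \<Longrightarrow> ht (j # insr r u) = ht (j # u)"
proof -
  assume "j \<le> r"
  then have "ht (j # insr r u) = ht (j # map (shf r) u)" unfolding insr_def by (intro ht_cc_ge) simp
  also have "\<dots> = ht (j # u)" by (rule ht_cons_map[OF smo_shf]) (use \<open>j \<le> r\<close> in \<open>auto simp: shf_def\<close>)
  finally show ?thesis .
qed

lemma ht_j_insr_gt: "r < j \<Longrightarrow> ht (j # insr r u) = Suc (ht (r # u))"
  using ht_cc_lt[of r j "map (shf r) u"] ht_insr[of r u] unfolding insr_def by simp

lemma ht_pos: "ht (x # xs) \<ge> 1"
  by simp

lemma EV_cons: "EV (x # ys) = (if even (ht (x # ys)) then {1} else {}) \<union> Suc ` EV ys"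
proof (rule set_eqI)
  fix i
  show "i \<in> EV (x # ys) \<longleftrightarrow> i \<in> (if even (ht (x # ys)) then {1} else {}) \<union> Suc ` EV ys"
  proof (cases i)
    case 0 then show ?thesis by (auto simp: EV_def)
  next
    case (Suc i')
    show ?thesis
    proof (cases i')
      case 0 then show ?thesis using Suc by (auto simp: EV_def height_at_def)
    next
      case (Suc i'')
      then show ?thesis using \<open>i = Suc i'\<close> by (auto simp: EV_def height_at_def)
    qed
  qed
qed

lemma EV_map: "smo h (set ys) \<Longrightarrow> EV (map h ys) = EV ys"
proof -
  assume sm: "smo h (set ys)"
  have "height_at (map h ys) i = height_at ys i" for i
    unfolding height_at_def drop_map by (rule ht_map, rule smo_subset[OF sm set_drop_subset])
  then show ?thesis unfolding EV_def by simp
qed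

lemma Des_cons: "Des (x # ys) = (if ys \<noteq> [] \<and> hd ys < x then {1} else {}) \<union> Suc ` Des ys"
proof (rule set_eqI)
  fix i
  show "i \<in> Des (x # ys) \<longleftrightarrow> i \<in> (if ys \<noteq> [] \<and> hd ys < x then {1} else {}) \<union> Suc ` Des ys"
  proof (cases i)
    case 0 then show ?thesis by (auto simp: Des_def)
  next
    case (Suc i')
    show ?thesis
    proof (cases i')
      case 0 then show ?thesis using Suc by (cases ys) (auto simp: Des_def)
    next
      case (Suc i'')
      then show ?thesis using \<open>i = Suc i'\<close> by (auto simp: Des_def nth_Cons')
    qed
  qed
qed

lemma Des_map: "smo h (set ys) \<Longrightarrow> Des (map h ys) = Des ys"
proof -
  assume sm: "smo h (set ys)"
  have "i \<in> {1..<length ys} \<Longrightarrow> (h (ys ! i) < h (ys ! (i - 1))) = (ys ! i < ys ! (i - 1))" for i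
  proof -
    assume "i \<in> {1..<length ys}"
    then have "ys ! i \<in> set ys" "ys ! (i - 1) \<in> set ys" by auto
    then show ?thesis using smo_less_iff[OF sm] by blast
  qed
  then show ?thesis unfolding Des_def by auto
qed



definition T :: "nat \<Rightarrow> nat \<Rightarrow> nat \<Rightarrow> 'a::comm_ring_1 \<Rightarrow> 'a" where
  "T m j k t = (if 1 \<le> k \<and> k \<le> j then 1 else 0) + (if j < k \<and> k \<le> Suc m then t else 0)"

fun H :: "nat \<Rightarrow> nat \<Rightarrow> 'a::comm_ring_1 \<Rightarrow> 'a \<Rightarrow> 'a" where
  "H 0 k s q = (if k = 1 then 1 else 0)"
| "H (Suc m) k s q = (\<Sum>j\<le>Suc m. T m j k (s * q) * H m j (s * q) q)"

lemma generic:
  fixes W :: "'a::comm_ring_1 \<Rightarrow> 'a \<Rightarrow> nat list \<Rightarrow> 'a" and st :: "nat list \<Rightarrow> nat"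
    and lab :: "nat list \<Rightarrow> nat \<Rightarrow> bool"
  assumes W0: "\<And>s q. W s q [] = 1" and st0: "st [] = 1"
    and Wins: "\<And>m u r s q. u \<in> P m \<Longrightarrow> r \<in> {1..Suc m} \<Longrightarrow>
        W s q (insr r u) = (if lab u r then s * q else 1) * W (s * q) q u"
    and stb: "\<And>m u. u \<in> P m \<Longrightarrow> st u \<le> Suc m"
    and Tprop: "\<And>m u k (t::'a). u \<in> P m \<Longrightarrow>
        (\<Sum>r\<in>{1..Suc m}. if st (insr r u) = k then (if lab u r then t else 1) else 0) = T m (st u) k t"
  shows "(\<Sum>u\<in>P m. if st u = k then W s q u else 0) = H m k s q"
proof (induction m arbitrary: k s)
  case 0
  then show ?case using W0 st0 by simp
next
  case (Suc m)
  have "(\<Sum>w\<in>P (Suc m). if st w = k then W s q w else 0)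
      = (\<Sum>(r,u)\<in>{1..Suc m} \<times> P m. if st (insr r u) = k then W s q (insr r u) else 0)"
    unfolding P_Suc by (subst sum.reindex[OF insr_inj]) (auto intro!: sum.cong)
  also have "\<dots> = (\<Sum>r\<in>{1..Suc m}. \<Sum>u\<in>P m. if st (insr r u) = k then W s q (insr r u) else 0)"
    by (rule sum.cartesian_product[symmetric])
  also have "\<dots> = (\<Sum>u\<in>P m. \<Sum>r\<in>{1..Suc m}. if st (insr r u) = k then W s q (insr r u) else 0)"
    by (rule sum.swap)
  also have "\<dots> = (\<Sum>u\<in>P m. W (s * q) q u *
       (\<Sum>r\<in>{1..Suc m}. if st (insr r u) = k then (if lab u r then s * q else 1) else 0))"
    unfolding sum_distrib_left
    by (intro sum.cong refl) (simp add: Wins mult.commute)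
  also have "\<dots> = (\<Sum>u\<in>P m. W (s * q) q u * T m (st u) k (s * q))"
  proof (intro sum.cong refl)
    fix u assume "u \<in> P m"
    show "W (s * q) q u *
       (\<Sum>r\<in>{1..Suc m}. if st (insr r u) = k then (if lab u r then s * q else 1) else 0) =
       W (s * q) q u * T m (st u) k (s * q)"
      by (simp only: Tprop[OF \<open>u \<in> P m\<close>])
  qed
  also have "\<dots> = (\<Sum>u\<in>P m. \<Sum>j\<le>Suc m. if st u = j then T m j k (s * q) * W (s * q) q u else 0)"
  proof (intro sum.cong refl)
    fix u assume "u \<in> P m"
    then have "st u \<in> {..Suc m}" using stb by auto
    then show "W (s * q) q u * T m (st u) k (s * q) =
      (\<Sum>j\<le>Suc m. if st u = j then T m j k (s * q) * W (s * q) q u else 0)"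
      by (simp add: sum.delta mult.commute)
  qed
  also have "\<dots> = (\<Sum>j\<le>Suc m. T m j k (s * q) * (\<Sum>u\<in>P m. if st u = j then W (s * q) q u else 0))"
    by (subst sum.swap) (simp add: sum_distrib_left if_distrib cong: if_cong)
  also have "\<dots> = H (Suc m) k s q" by (simp only: Suc.IH H.simps)
  finally show ?case .
qed

lemma generic_total:
  fixes W :: "'a::comm_ring_1 \<Rightarrow> 'a \<Rightarrow> nat list \<Rightarrow> 'a" and st :: "nat list \<Rightarrow> nat"
    and lab :: "nat list \<Rightarrow> nat \<Rightarrow> bool"
  assumes W0: "\<And>s q. W s q [] = 1" and st0: "st [] = 1"
    and Wins: "\<And>m u r s q. u \<in> P m \<Longrightarrow> r \<in> {1..Suc m} \<Longrightarrow>
        W s q (insr r u) = (if lab u r then s * q else 1) * W (s * q) q u"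
    and stb: "\<And>m u. u \<in> P m \<Longrightarrow> st u \<le> Suc m"
    and Tprop: "\<And>m u k (t::'a). u \<in> P m \<Longrightarrow>
        (\<Sum>r\<in>{1..Suc m}. if st (insr r u) = k then (if lab u r then t else 1) else 0) = T m (st u) k t"
  shows "(\<Sum>u\<in>P m. W s q u) = (\<Sum>k\<le>Suc m. H m k s q)"
proof -
  have "(\<Sum>u\<in>P m. W s q u) = (\<Sum>u\<in>P m. \<Sum>k\<le>Suc m. if st u = k then W s q u else 0)"
  proof (intro sum.cong refl)
    fix u assume "u \<in> P m"
    then have "st u \<in> {..Suc m}" using stb by auto
    then show "W s q u = (\<Sum>k\<le>Suc m. if st u = k then W s q u else 0)" by simp
  qed
  also have "\<dots> = (\<Sum>k\<le>Suc m. \<Sum>u\<in>P m. if st u = k then W s q u else 0)" by (rule sum.swap)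
  also have "\<dots> = (\<Sum>k\<le>Suc m. H m k s q)"
    by (intro sum.cong refl generic[where lab=lab]) (use assms in auto)
  finally show ?thesis .
qed

lemma weight_lem:
  fixes s q :: "'a::comm_ring_1"
  assumes "finite S" "0 \<notin> S"
  shows "s ^ card ((if e then {1} else {}) \<union> Suc ` S) * q ^ (\<Sum> ((if e then {1} else {}) \<union> Suc ` S))
     = (if e then s * q else 1) * (s * q) ^ card S * q ^ (\<Sum> S)"
proof -
  have c: "card (Suc ` S) = card S" by (simp add: card_image)
  have sm: "\<Sum> (Suc ` S) = \<Sum> S + card S" 
  proof -
    have "\<Sum> (Suc ` S) = (\<Sum>x\<in>S. x + 1)" by (simp add: sum.reindex)
    also have "\<dots> = \<Sum> S + card S" using sum.distrib[of "\<lambda>x. x" "\<lambda>x. 1" S] by simp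
    finally show ?thesis .
  qed
  have n1: "1 \<notin> Suc ` S" using assms by auto
  have fin: "finite (Suc ` S)" using assms by simp
  show ?thesis
  proof (cases e)
    case True
    have "card ({1} \<union> Suc ` S) = Suc (card S)" using n1 fin c by simp
    moreover have "\<Sum> ({1} \<union> Suc ` S) = 1 + \<Sum> S + card S" using n1 fin sm by simp
    ultimately show ?thesis using True by (simp add: power_add power_mult_distrib ac_simps)
  next
    case False
    then show ?thesis using c sm by (simp add: power_add power_mult_distrib ac_simps)
  qed
qed



definition WD :: "'a::comm_ring_1 \<Rightarrow> 'a \<Rightarrow> nat list \<Rightarrow> 'a" where
  "WD s q w = s ^ des w * q ^ MAJ w"

definition stD :: "nat list \<Rightarrow> nat" where
  "stD w = (if w = [] then 1 else hd w)"

definition labD :: "nat list \<Rightarrow> nat \<Rightarrow> bool" where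
  "labD u r = (u \<noteq> [] \<and> hd u < r)"

lemma Des_fin: "finite (Des w)" "0 \<notin> Des w"
  unfolding Des_def by auto

lemma WD_ins: "WD s q (insr r u) = (if labD u r then s * q else 1) * WD (s * q) q u"
proof -
  have lab: "(map (shf r) u \<noteq> [] \<and> hd (map (shf r) u) < r) = labD u r"
    by (cases u) (auto simp: labD_def shf_def)
  have "Des (insr r u) = (if labD u r then {1} else {}) \<union> Suc ` Des u"
    unfolding insr_def Des_cons Des_map[OF smo_shf] lab ..
  then show ?thesis unfolding WD_def des_def MAJ_def
    using weight_lem[OF Des_fin, where s=s and q=q and e="labD u r" and w1=u] by (simp add: ac_simps)
qed

lemma stD_bound: "u \<in> P m \<Longrightarrow> stD u \<le> Suc m"
proof -
  assume "u \<in> P m"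
  then have "set u = {1..m}" by (rule permutations_of_setD)
  then show ?thesis unfolding stD_def by (cases u) (auto, metis atLeastAtMost_iff insertI1 le_SucI)
qed

lemma TD: "u \<in> P m \<Longrightarrow>
   (\<Sum>r\<in>{1..Suc m}. if stD (insr r u) = k then (if labD u r then t else 1) else 0) = T m (stD u) k t"
proof -
  assume u: "u \<in> P m"
  then have su: "set u = {1..m}" by (rule permutations_of_setD)
  have "(\<Sum>r\<in>{1..Suc m}. if stD (insr r u) = k then (if labD u r then t else 1) else 0)
      = (\<Sum>r\<in>{1..Suc m}. if r = k then (if labD u r then t else 1) else 0)"
    by (simp add: stD_def insr_def)
  also have "\<dots> = (if k \<in> {1..Suc m} then (if labD u k then t else 1) else 0)"
    by (rule sum.delta[OF finite_atLeastAtMost])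
  also have "\<dots> = T m (stD u) k t"
  proof (cases u)
    case Nil
    then have "m = 0" using su by auto
    then show ?thesis using Nil by (auto simp: T_def stD_def labD_def)
  next
    case (Cons a v)
    then have "a \<in> {1..m}" using su by auto
    then show ?thesis using Cons by (auto simp: T_def stD_def labD_def)
  qed
  finally show ?thesis .
qed

lemma D_total: "(\<Sum>u\<in>P m. s ^ des u * q ^ MAJ u) = (\<Sum>k\<le>Suc m. H m k s (q::'a::comm_ring_1))"
  using generic_total[where W=WD and st=stD and lab=labD, OF _ _ WD_ins stD_bound TD]
  by (simp add: WD_def des_def MAJ_def Des_def stD_def)



definition WE :: "'a::comm_ring_1 \<Rightarrow> 'a \<Rightarrow> nat list \<Rightarrow> 'a" where
  "WE s q w = s ^ veh' w * q ^ SIVEH w"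

definition stE :: "nat list \<Rightarrow> nat" where
  "stE u = card {j\<in>{1..Suc (length u)}. odd (ht (j # u))}"

definition labE :: "nat list \<Rightarrow> nat \<Rightarrow> bool" where
  "labE u r = even (ht (r # u))"

declare ht.simps(2)[simp del]

lemma EV_fin: "finite (EV w)" "0 \<notin> EV w"
  unfolding EV_def by auto

lemma WE_ins: "WE s q (insr r u) = (if labE u r then s * q else 1) * WE (s * q) q u"
proof -
  have "EV (insr r u) = (if labE u r then {1} else {}) \<union> Suc ` EV u"
    using EV_cons[of r "map (shf r) u"] ht_insr[of r u]
    unfolding EV_map[OF smo_shf] labE_def insr_def by simp
  then show ?thesis unfolding WE_def veh'_def SIVEH_def
    using weight_lem[OF EV_fin, where s=s and q=q and e="labE u r" and w1=u] by (simp add: ac_simps)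
qed

lemma stE_bound: "u \<in> P m \<Longrightarrow> stE u \<le> Suc m"
proof -
  assume "u \<in> P m"
  then have "length u = m" by (simp add: length_finite_permutations_of_set)
  have "card {j\<in>{1..Suc m}. odd (ht (j # u))} \<le> card {1..Suc m}"
    by (rule card_mono) auto
  then show ?thesis unfolding stE_def using \<open>length u = m\<close> by simp
qed

lemma rank_bij:
  fixes S :: "nat set"
  assumes "finite S"
  shows "bij_betw (\<lambda>r. card {j\<in>S. j \<le> r}) S {1..card S}"
proof -
  let ?f = "\<lambda>r. card {j\<in>S. j \<le> r}"
  have inj: "inj_on ?f S"
  proof (rule inj_onI)
    fix x y assume x: "x \<in> S" and y: "y \<in> S" and e: "?f x = ?f y"
    show "x = y"
    proof (rule ccontr)
      assume "x \<noteq> y"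
      then consider "x < y" | "y < x" by (meson linorder_neqE_nat)
      then show False
      proof cases
        case 1
        have "{j\<in>S. j \<le> x} \<subset> {j\<in>S. j \<le> y}" using 1 y by (auto simp: set_eq_iff) (metis leD order_refl)
        then have "?f x < ?f y" using assms by (intro psubset_card_mono) auto
        then show False using e by simp
      next
        case 2
        have "{j\<in>S. j \<le> y} \<subset> {j\<in>S. j \<le> x}" using 2 x by (auto simp: set_eq_iff) (metis leD order_refl)
        then have "?f y < ?f x" using assms by (intro psubset_card_mono) auto
        then show False using e by simp
      qed
    qed
  qed
  have sub: "?f ` S \<subseteq> {1..card S}"
  proof
    fix z assume "z \<in> ?f ` S"
    then obtain x where x: "x \<in> S" "z = ?f x" by blast
    have "{j\<in>S. j \<le> x} \<noteq> {}" using x by auto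
    then have "?f x \<ge> 1" using assms by (simp add: Suc_le_eq card_gt_0_iff)
    moreover have "?f x \<le> card S" using assms by (intro card_mono) auto
    ultimately show "z \<in> {1..card S}" using x by auto
  qed
  have "card (?f ` S) = card {1..card S}" using card_image[OF inj] by simp
  then have "?f ` S = {1..card S}" using sub by (intro card_subset_eq) auto
  then show ?thesis using inj by (simp add: bij_betw_def)
qed

lemma TE:
  assumes u: "u \<in> P m"
  shows "(\<Sum>r\<in>{1..Suc m}. if stE (insr r u) = k then (if labE u r then t else 1) else 0) = T m (stE u) k t"
proof -
  have len: "length u = m" using u by (simp add: length_finite_permutations_of_set)
  define Os where "Os = {j\<in>{1..Suc m}. odd (ht (j # u))}"
  define Es where "Es = {j\<in>{1..Suc m}. \<not> odd (ht (j # u))}"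
  have finOs: "finite Os" and finEs: "finite Es" unfolding Os_def Es_def by auto
  have stu: "stE u = card Os" unfolding stE_def Os_def len ..
  have lenI: "length (insr r u) = Suc m" for r using len by (simp add: insr_def)
  have disj: "Os \<inter> Es = {}" and un: "Os \<union> Es = {1..Suc m}" unfolding Os_def Es_def by auto
  have cOE: "card Os + card Es = Suc m" using card_Un_disjoint[OF finOs finEs disj] un by simp
  have st_odd: "stE (insr r u) = card {j\<in>Os. j \<le> r}" if r: "r \<in> {1..Suc m}" "odd (ht (r # u))" for r
  proof -
    have "{j\<in>{1..Suc (Suc m)}. odd (ht (j # insr r u))} = {j\<in>Os. j \<le> r}"
    proof (rule set_eqI)
      fix j
      show "j \<in> {j\<in>{1..Suc (Suc m)}. odd (ht (j # insr r u))} \<longleftrightarrow> j \<in> {j\<in>Os. j \<le> r}"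
      proof (cases "j \<le> r")
        case True then show ?thesis using r by (auto simp: Os_def ht_j_insr_le)
      next
        case False then show ?thesis using r by (auto simp: Os_def ht_j_insr_gt)
      qed
    qed
    then show ?thesis unfolding stE_def lenI by simp
  qed
  have partr: "card {j\<in>Os. j \<le> r} + card {j\<in>Es. j \<le> r} = r" if r: "r \<in> {1..Suc m}" for r
  proof -
    have "{j\<in>Os. j \<le> r} \<union> {j\<in>Es. j \<le> r} = {1..r}" using r unfolding Os_def Es_def by auto
    moreover have "{j\<in>Os. j \<le> r} \<inter> {j\<in>Es. j \<le> r} = {}" using disj by auto
    ultimately show ?thesis using card_Un_disjoint[of "{j\<in>Os. j \<le> r}" "{j\<in>Es. j \<le> r}"] finOs finEs by simp
  qed
  have st_even: "stE (insr r u) = Suc (Suc m) - card {j\<in>Es. j \<le> r}" if r: "r \<in> {1..Suc m}" "\<not> odd (ht (r # u))" for r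
  proof -
    have "{j\<in>{1..Suc (Suc m)}. odd (ht (j # insr r u))} = {j\<in>Os. j \<le> r} \<union> {r<..Suc (Suc m)}"
    proof (rule set_eqI)
      fix j
      show "j \<in> {j\<in>{1..Suc (Suc m)}. odd (ht (j # insr r u))} \<longleftrightarrow> j \<in> {j\<in>Os. j \<le> r} \<union> {r<..Suc (Suc m)}"
      proof (cases "j \<le> r")
        case True then show ?thesis using r by (auto simp: Os_def ht_j_insr_le)
      next
        case False then show ?thesis using r by (auto simp: Os_def ht_j_insr_gt)
      qed
    qed
    moreover have "card ({j\<in>Os. j \<le> r} \<union> {r<..Suc (Suc m)}) = card {j\<in>Os. j \<le> r} + (Suc (Suc m) - r)"
      by (subst card_Un_disjoint) (use finOs in auto)
    ultimately have "stE (insr r u) = card {j\<in>Os. j \<le> r} + (Suc (Suc m) - r)"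
      unfolding stE_def lenI by simp
    then show ?thesis using partr[OF r(1)] r(1) by auto
  qed
  have "(\<Sum>r\<in>{1..Suc m}. if stE (insr r u) = k then (if labE u r then t else 1) else 0)
     = (\<Sum>r\<in>Os. if stE (insr r u) = k then (if labE u r then t else 1) else 0)
     + (\<Sum>r\<in>Es. if stE (insr r u) = k then (if labE u r then t else 1) else 0)"
    unfolding un[symmetric] by (rule sum.union_disjoint[OF finOs finEs disj])
  also have "(\<Sum>r\<in>Os. if stE (insr r u) = k then (if labE u r then t else 1) else 0)
     = (\<Sum>r\<in>Os. (\<lambda>i. if i = k then 1 else 0) (card {j\<in>Os. j \<le> r}))"
    by (intro sum.cong refl) (auto simp: st_odd labE_def Os_def)
  also have "\<dots> = (\<Sum>i\<in>{1..card Os}. if i = k then 1 else 0)"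
    by (rule sum.reindex_bij_betw[OF rank_bij[OF finOs]])
  also have "\<dots> = (if 1 \<le> k \<and> k \<le> card Os then 1 else 0)"
    by (subst sum.delta) auto
  also have "(\<Sum>r\<in>Es. if stE (insr r u) = k then (if labE u r then t else 1) else 0)
     = (\<Sum>r\<in>Es. (\<lambda>i. if Suc (Suc m) - i = k then t else 0) (card {j\<in>Es. j \<le> r}))"
    by (intro sum.cong refl) (auto simp: st_even labE_def Es_def)
  also have "\<dots> = (\<Sum>i\<in>{1..card Es}. if Suc (Suc m) - i = k then t else 0)"
    by (rule sum.reindex_bij_betw[OF rank_bij[OF finEs]])
  also have "\<dots> = (\<Sum>i\<in>{1..card Es}. if i = Suc (Suc m) - k then t else 0)"
    by (intro sum.cong refl) (use cOE in auto)
  also have "\<dots> = (if card Os < k \<and> k \<le> Suc m then t else 0)"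
    by (subst sum.delta) (use cOE in auto)
  finally show ?thesis unfolding stu T_def .
qed

lemma E_total: "(\<Sum>u\<in>P m. s ^ veh' u * q ^ SIVEH u) = (\<Sum>k\<le>Suc m. H m k s (q::'a::comm_ring_1))"
proof -
  have st0: "stE [] = 1" unfolding stE_def by (simp add: ht.simps)
  have W0: "WE s q [] = 1" for s q :: 'a unfolding WE_def veh'_def SIVEH_def EV_def by simp
  show ?thesis
    using generic_total[where W=WE and st=stE and lab=labE, OF W0 st0 WE_ins stE_bound TE]
    by (simp add: WE_def)
qed


theorem corollary8p2:
  fixes n :: nat and s q :: "'a :: comm_ring_1"
  shows "(\<Sum>w\<in>permutations_of_set {1..n}. s ^ veh' w * q ^ SIVEH w)
       = (\<Sum>w\<in>permutations_of_set {1..n}. s ^ des w * q ^ MAJ w)"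
  using E_total[where m=n and s=s and q=q] D_total[where m=n and s=s and q=q] by simp

end
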